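(* Let $G$ be a simple graph of order $n$. If $$\mu(G) > -\frac{1}{2}+\sqrt{\left(n-\frac{3}{2}\right)^2+2},$$ then $G$ is Hamilton-connected unless $G=K_{n-1}+e+e'$.
   Context: For a simple graph $G$, $\mu(G)$ denotes the largest eigenvalue (spectral radius) of the adjacency matrix $A(G)$. A graph is Hamilton-connected if every two distinct vertices are joined by a Hamiltonian path (a path containing all vertices). $K_{n-1}+e+e'$ denotes the graph obtained from the complete graph $K_{n-1}$ by adding one new vertex and joining it by two edges $e,e'$ to two vertices of $K_{n-1}$. *)

theory Defs
  imports "HOL-Analysis.Analysis"
begin

text \<open>A simple graph on the finite vertex type 'a (vertex set = UNIV, order = CARD('a)),
  given by a symmetric irreflexive adjacency relation E.\<close>

definition simple_graph :: "('a \<Rightarrow> 'a \<Rightarrow> bool) \<Rightarrow> bool" where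
  "simple_graph E \<longleftrightarrow> (\<forall>x y. E x y \<longrightarrow> E y x) \<and> (\<forall>x. \<not> E x x)"

definition adj_matrix :: "('a::finite \<Rightarrow> 'a \<Rightarrow> bool) \<Rightarrow> real^'a^'a" where
  "adj_matrix E = (\<chi> i j. if E i j then 1 else 0)"

text \<open>Largest eigenvalue of a real square matrix (all eigenvalues of a symmetric
  matrix are real).\<close>

definition largest_eigenvalue :: "real^'n^'n \<Rightarrow> real" where
  "largest_eigenvalue A = Max {c. \<exists>v. v \<noteq> 0 \<and> A *v v = c *\<^sub>R v}"

definition spectral_radius_graph :: "('a::finite \<Rightarrow> 'a \<Rightarrow> bool) \<Rightarrow> real" where
  "spectral_radius_graph E = largest_eigenvalue (adj_matrix E)"

definition ham_path :: "('a::finite \<Rightarrow> 'a \<Rightarrow> bool) \<Rightarrow> 'a \<Rightarrow> 'a \<Rightarrow> 'a list \<Rightarrow> bool" where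
  "ham_path E u v p \<longleftrightarrow> distinct p \<and> set p = UNIV \<and> p \<noteq> [] \<and> hd p = u \<and> last p = v \<and>
     (\<forall>i. Suc i < length p \<longrightarrow> E (p ! i) (p ! Suc i))"

definition hamilton_connected :: "('a::finite \<Rightarrow> 'a \<Rightarrow> bool) \<Rightarrow> bool" where
  "hamilton_connected E \<longleftrightarrow> (\<forall>u v. u \<noteq> v \<longrightarrow> (\<exists>p. ham_path E u v p))"

text \<open>E is (a labelled copy of) K_{n-1}+e+e': complete graph on all vertices but w,
  plus the two edges wa, wb with a, b distinct vertices of the K_{n-1}.\<close>

definition is_K_minus_plus_two :: "('a \<Rightarrow> 'a \<Rightarrow> bool) \<Rightarrow> bool" where
  "is_K_minus_plus_two E \<longleftrightarrow> (\<exists>w a b. a \<noteq> b \<and> a \<noteq> w \<and> b \<noteq> w \<and>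
     (\<forall>x y. E x y \<longleftrightarrow> ((x \<noteq> y \<and> x \<noteq> w \<and> y \<noteq> w) \<or> {x, y} = {w, a} \<or> {x, y} = {w, b})))"

end

theory Submission
  imports Defs
begin


lemma mv_adj: "(adj_matrix E *v x) $ i = (\<Sum>j\<in>UNIV. if E i j then x $ j else 0)"
  by (auto simp add: adj_matrix_def matrix_vector_mult_def intro!: sum.cong)

lemma inner_real_vec: "(x::real^'n) \<bullet> y = (\<Sum>i\<in>UNIV. x $ i * y $ i)"
  by (simp add: inner_vec_def)

lemma adj_sym_inner:
  assumes "simple_graph E"
  shows "x \<bullet> (adj_matrix E *v y) = y \<bullet> (adj_matrix E *v x)"
proof -
  have s: "\<And>i j. E i j = E j i" using assms unfolding simple_graph_def by blast
  have "x \<bullet> (adj_matrix E *v y) = (\<Sum>i\<in>UNIV. \<Sum>j\<in>UNIV. if E i j then x$i * y$j else 0)"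
    by (simp add: inner_real_vec mv_adj sum_distrib_left if_distrib cong: if_cong)
  also have "\<dots> = (\<Sum>j\<in>UNIV. \<Sum>i\<in>UNIV. if E i j then x$i * y$j else 0)"
    by (rule sum.swap)
  also have "\<dots> = y \<bullet> (adj_matrix E *v x)"
    by (simp add: inner_real_vec mv_adj sum_distrib_left if_distrib s mult.commute cong: if_cong)
  finally show ?thesis .
qed

lemma quad_aux:
  fixes b c :: real
  assumes "b > 0" "c \<ge> 0"
  shows "2 * (- b / (c + 1)) * b + (- b / (c + 1))^2 * c < 0"
proof -
  define t where "t = - b / (c + 1)"
  have c1: "c + 1 > 0" using assms by simp
  have tneg: "t < 0" unfolding t_def using assms c1 by (simp add: divide_pos_pos)
  have "c / (c + 1) \<le> 1" using c1 by simp
  hence h: "b * (c / (c+1)) \<le> b" by (rule mult_left_le) (use assms in auto)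
  have "t * c = - (b * (c / (c+1)))" unfolding t_def by simp
  hence tc: "t * c \<ge> - b" using h by linarith
  have "t^2 * c = t * (t * c)" by (simp add: power2_eq_square)
  also have "\<dots> \<le> t * (- b)" using tc tneg by (intro mult_left_mono_neg) auto
  finally have "2 * t * b + t^2 * c \<le> t * b" by (simp add: mult.commute)
  also have "\<dots> < 0" using tneg assms by (simp add: mult_neg_pos)
  finally show ?thesis unfolding t_def .
qed
lemma sym_eig_exists:
  fixes A :: "real^'n^'n"
  assumes sym: "\<And>x y. x \<bullet> (A *v y) = y \<bullet> (A *v x)"
  shows "\<exists>c v. v \<noteq> 0 \<and> A *v v = c *\<^sub>R v"
proof -
  let ?f = "\<lambda>x::real^'n. x \<bullet> (A *v x)"
  have "sphere (0::real^'n) 1 \<noteq> {}" by simp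
  moreover have "continuous_on (sphere 0 1) ?f"
    by (intro continuous_intros linear_continuous_on matrix_vector_mul_linear
          linear_linear[THEN iffD1])
  ultimately obtain x0 where x0: "x0 \<in> sphere 0 1" and mx: "\<And>y. y \<in> sphere 0 1 \<Longrightarrow> ?f y \<le> ?f x0"
    using continuous_attains_sup[of "sphere (0::real^'n) 1" ?f] compact_sphere by blast
  define mu where "mu = ?f x0"
  have nx0: "norm x0 = 1" using x0 by simp
  have x0x0: "x0 \<bullet> x0 = 1" using nx0 by (simp add: dot_square_norm)
  have ray: "y \<bullet> (A *v y) \<le> mu * (y \<bullet> y)" for y
  proof (cases "y = 0")
    case True then show ?thesis by (simp add: matrix_vector_mult_0_right)
  next
    case False
    let ?u = "(1 / norm y) *\<^sub>R y"
    have "?u \<in> sphere 0 1" using False by simp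
    hence hf: "?f ?u \<le> mu" using mx mu_def by blast
    have eq: "?f ?u = (y \<bullet> (A *v y)) / (norm y)^2"
      by (simp add: matrix_vector_mult_scaleR power2_eq_square)
    have le: "(y \<bullet> (A *v y)) / (norm y)^2 \<le> mu" using hf eq by linarith
    have "(norm y)^2 > 0" using False by simp
    with le have "y \<bullet> (A *v y) \<le> mu * (norm y)^2" by (simp add: divide_le_eq)
    thus ?thesis by (simp add: dot_square_norm)
  qed
  define B where "B = (\<lambda>y. mu *\<^sub>R y - A *v y)"
  have Bsym: "z \<bullet> B w = w \<bullet> B z" for z w
    unfolding B_def using sym[of z w] by (simp add: inner_diff_right inner_commute)
  have q0: "x0 \<bullet> B x0 = 0" unfolding B_def by (simp add: inner_diff_right x0x0 mu_def)
  have qpos: "y \<bullet> B y \<ge> 0" for y using ray[of y] unfolding B_def by (simp add: inner_diff_right)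
  have Blin: "B (a + t *\<^sub>R b) = B a + t *\<^sub>R B b" for a b t
    unfolding B_def by (simp add: matrix_vector_right_distrib matrix_vector_mult_scaleR algebra_simps)
  let ?z = "B x0"
  let ?b = "?z \<bullet> ?z"
  let ?c = "?z \<bullet> B ?z"
  have exp: "(x0 + t *\<^sub>R ?z) \<bullet> B (x0 + t *\<^sub>R ?z) = 2 * t * ?b + t^2 * ?c" for t
    using Bsym[of x0 ?z] q0
    by (simp add: Blin inner_add_left inner_add_right power2_eq_square algebra_simps)
  have cpos: "?c \<ge> 0" by (rule qpos)
  have "?b = 0"
  proof (rule ccontr)
    assume "?b \<noteq> 0"
    hence bp: "?b > 0" by (simp add: order_less_le)
    define t where "t = - ?b / (?c + 1)"
    have "2 * t * ?b + t^2 * ?c < 0" unfolding t_def using bp cpos by (rule quad_aux)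
    moreover have "2 * t * ?b + t^2 * ?c \<ge> 0" using qpos exp by metis
    ultimately show False by simp
  qed
  hence "B x0 = 0" by simp
  hence "A *v x0 = mu *\<^sub>R x0" unfolding B_def by simp
  moreover have "x0 \<noteq> 0" using nx0 by auto
  ultimately show ?thesis by blast
qed

lemma sym_eig_finite:
  fixes A :: "real^'n^'n"
  assumes sym: "\<And>x y. x \<bullet> (A *v y) = y \<bullet> (A *v x)"
  shows "finite {c. \<exists>v. v \<noteq> 0 \<and> A *v v = c *\<^sub>R v}"
proof -
  let ?S = "{c. \<exists>v. v \<noteq> 0 \<and> A *v v = c *\<^sub>R v}"
  define g where "g c = (SOME v. v \<noteq> 0 \<and> A *v v = c *\<^sub>R v)" for c
  have g: "g c \<noteq> 0 \<and> A *v g c = c *\<^sub>R g c" if "c \<in> ?S" for c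
  proof -
    from that obtain v where "v \<noteq> 0 \<and> A *v v = c *\<^sub>R v" by blast
    then show ?thesis unfolding g_def by (rule someI)
  qed
  have orth: "g c \<bullet> g d = 0" if "c \<in> ?S" "d \<in> ?S" "c \<noteq> d" for c d
  proof -
    have "c * (g c \<bullet> g d) = (A *v g c) \<bullet> g d" using g[OF that(1)] by simp
    also have "\<dots> = g c \<bullet> (A *v g d)" using sym[of "g d" "g c"] by (simp add: inner_commute)
    also have "\<dots> = d * (g c \<bullet> g d)" using g[OF that(2)] by simp
    finally show ?thesis using that(3) by simp
  qed
  have inj: "inj_on g ?S"
  proof (rule inj_onI)
    fix c d assume c: "c \<in> ?S" and d: "d \<in> ?S" and e: "g c = g d"
    show "c = d"
    proof (rule ccontr)
      assume "c \<noteq> d"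
      hence "g c \<bullet> g c = 0" using orth[OF c d] e by simp
      thus False using g[OF c] by simp
    qed
  qed
  have "pairwise orthogonal (g ` ?S)"
    unfolding pairwise_def orthogonal_def using orth by blast
  hence "finite (g ` ?S)" by (rule pairwise_orthogonal_imp_finite)
  thus ?thesis using inj finite_imageD by blast
qed

lemma spectral_radius_eig:
  assumes "simple_graph (E::'a::finite \<Rightarrow> 'a \<Rightarrow> bool)"
  shows "\<exists>v. v \<noteq> 0 \<and> adj_matrix E *v v = spectral_radius_graph E *\<^sub>R v"
proof -
  let ?S = "{c. \<exists>v. v \<noteq> 0 \<and> adj_matrix E *v v = c *\<^sub>R v}"
  have sym: "\<And>x y. x \<bullet> (adj_matrix E *v y) = y \<bullet> (adj_matrix E *v x)"
    using adj_sym_inner[OF assms] .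
  have "finite ?S" by (rule sym_eig_finite[OF sym])
  moreover have "?S \<noteq> {}" using sym_eig_exists[OF sym] by blast
  ultimately have "Max ?S \<in> ?S" by (rule Max_in)
  thus ?thesis unfolding spectral_radius_graph_def largest_eigenvalue_def by blast
qed



lemma stanley:
  fixes E :: "'a::finite \<Rightarrow> 'a \<Rightarrow> bool"
  assumes sg: "simple_graph E" and v0: "v \<noteq> 0" and ev: "adj_matrix E *v v = l *\<^sub>R v"
  shows "l^2 + l \<le> real (\<Sum>i\<in>UNIV. card {j. E i j})"
proof -
  have sym: "\<And>i j. E i j = E j i" and irr: "\<And>i. \<not> E i i"
    using sg unfolding simple_graph_def by blast+
  define a where "a i = v $ i" for i
  define s where "s = (\<Sum>i\<in>UNIV. (a i)^2)"
  define d where "d i = real (card {j. E i j})" for i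
  have e1: "l * a i = (\<Sum>j\<in>{j. E i j}. a j)" for i
  proof -
    have "l * a i = (adj_matrix E *v v) $ i" using ev unfolding a_def by simp
    also have "\<dots> = (\<Sum>j\<in>UNIV. if E i j then a j else 0)" unfolding a_def by (rule mv_adj)
    also have "\<dots> = (\<Sum>j\<in>{j. E i j}. a j)" by (simp add: sum.inter_filter[symmetric])
    finally show ?thesis .
  qed
  have e3: "(\<Sum>j\<in>{j. E i j}. (a j)^2) \<le> s - (a i)^2" for i
  proof -
    have "(\<Sum>j\<in>insert i {j. E i j}. (a j)^2) \<le> s" unfolding s_def
      by (rule sum_mono2) auto
    moreover have "(\<Sum>j\<in>insert i {j. E i j}. (a j)^2) = (a i)^2 + (\<Sum>j\<in>{j. E i j}. (a j)^2)"
      using irr by (subst sum.insert) auto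
    ultimately show ?thesis by simp
  qed
  have e2: "l^2 * (a i)^2 \<le> d i * (s - (a i)^2)" for i
  proof -
    have "l^2 * (a i)^2 = (\<Sum>j\<in>{j. E i j}. a j)^2" using e1[of i] by (simp add: power_mult_distrib[symmetric])
    also have "\<dots> \<le> (\<Sum>j\<in>{j. E i j}. (a j)^2) * d i" unfolding d_def by (rule sum_squared_le_sum_of_squares)
    also have "\<dots> \<le> (s - (a i)^2) * d i" using e3[of i] unfolding d_def by (intro mult_right_mono) auto
    finally show ?thesis by (simp add: mult.commute)
  qed
  have sum1: "l^2 * s \<le> (\<Sum>i\<in>UNIV. d i) * s - (\<Sum>i\<in>UNIV. d i * (a i)^2)"
  proof -
    have "l^2 * s = (\<Sum>i\<in>UNIV. l^2 * (a i)^2)" unfolding s_def by (simp add: sum_distrib_left)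
    also have "\<dots> \<le> (\<Sum>i\<in>UNIV. d i * (s - (a i)^2))" by (rule sum_mono) (rule e2)
    also have "\<dots> = (\<Sum>i\<in>UNIV. d i) * s - (\<Sum>i\<in>UNIV. d i * (a i)^2)"
      by (simp add: right_diff_distrib sum_subtractf sum_distrib_right)
    finally show ?thesis .
  qed
  have dsum: "d i = (\<Sum>j\<in>UNIV. if E i j then 1 else 0)" for i
    unfolding d_def by (simp add: sum.If_cases)
  have sum2: "l * s \<le> (\<Sum>i\<in>UNIV. d i * (a i)^2)"
  proof -
    have "l * s = (\<Sum>i\<in>UNIV. a i * (l * a i))" unfolding s_def
      by (simp add: sum_distrib_left power2_eq_square mult.assoc mult.left_commute)
    also have "\<dots> = (\<Sum>i\<in>UNIV. \<Sum>j\<in>UNIV. if E i j then a i * a j else 0)"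
      by (simp add: e1 sum.inter_filter[symmetric] sum_distrib_left if_distrib cong: if_cong)
    also have "\<dots> \<le> (\<Sum>i\<in>UNIV. \<Sum>j\<in>UNIV. if E i j then ((a i)^2 + (a j)^2) / 2 else 0)"
    proof (intro sum_mono)
      fix i j
      have "a i * a j \<le> ((a i)^2 + (a j)^2) / 2"
        using sum_squares_ge_zero[of "a i - a j" 0] by (simp add: power2_diff field_simps power2_eq_square)
      thus "(if E i j then a i * a j else 0) \<le> (if E i j then ((a i)^2 + (a j)^2) / 2 else 0)" by simp
    qed
    also have "\<dots> = ((\<Sum>i\<in>UNIV. \<Sum>j\<in>UNIV. if E i j then (a i)^2 else 0)
                   + (\<Sum>i\<in>UNIV. \<Sum>j\<in>UNIV. if E i j then (a j)^2 else 0)) / 2"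
    proof -
      have pw: "\<And>i j. (if E i j then ((a i)^2 + (a j)^2)/2 else 0) = ((if E i j then (a i)^2 else 0) + (if E i j then (a j)^2 else 0))/2" by simp
      show ?thesis by (simp only: pw sum_divide_distrib[symmetric] sum.distrib)
    qed
    finally have L: "l * s \<le> ((\<Sum>i\<in>UNIV. \<Sum>j\<in>UNIV. if E i j then (a i)^2 else 0)
                   + (\<Sum>i\<in>UNIV. \<Sum>j\<in>UNIV. if E i j then (a j)^2 else 0)) / 2" .
    have "(\<Sum>i\<in>UNIV. \<Sum>j\<in>UNIV. if E i j then (a j)^2 else 0)
             = (\<Sum>j\<in>UNIV. \<Sum>i\<in>UNIV. if E j i then (a j)^2 else 0)"
      by (subst sum.swap) (simp add: sym)
    also have "\<dots> = (\<Sum>i\<in>UNIV. d i * (a i)^2)"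
      by (auto simp: dsum sum_distrib_right intro!: sum.cong)
    finally have Y: "(\<Sum>i\<in>UNIV. \<Sum>j\<in>UNIV. if E i j then (a j)^2 else 0) = (\<Sum>i\<in>UNIV. d i * (a i)^2)" .
    have X: "(\<Sum>i\<in>UNIV. \<Sum>j\<in>UNIV. if E i j then (a i)^2 else 0) = (\<Sum>i\<in>UNIV. d i * (a i)^2)"
      by (auto simp: dsum sum_distrib_right intro!: sum.cong)
    show ?thesis using L unfolding X Y by simp
  qed
  have spos: "s > 0"
  proof -
    obtain k where "v $ k \<noteq> 0" using v0 by (metis vec_eq_iff zero_index)
    hence "(a k)^2 > 0" unfolding a_def by simp
    moreover have "(a k)^2 \<le> s" unfolding s_def by (rule member_le_sum) auto
    ultimately show ?thesis by linarith
  qed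
  have "(l^2 + l) * s \<le> (\<Sum>i\<in>UNIV. d i) * s" using sum1 sum2 by (simp add: distrib_right)
  hence "l^2 + l \<le> (\<Sum>i\<in>UNIV. d i)" using spos by simp
  thus ?thesis unfolding d_def by simp
qed



lemma ham_path_intro:
  assumes "distinct q" "set q = UNIV" "q \<noteq> []" "hd q = u" "last q = v"
    "\<And>i. Suc i < length q \<Longrightarrow> F (q!i) (q!Suc i)"
  shows "ham_path F u v q"
  using assms unfolding ham_path_def by blast

lemma distinct_univ_length:
  assumes "distinct (p::'a::finite list)" "set p = UNIV"
  shows "length p = CARD('a)"
  using assms distinct_card by fastforce

lemma two_opt:
  fixes p :: "'a::finite list"
  assumes dp: "distinct p" and sp: "set p = UNIV"
   and lr: "l < r" and rn: "Suc r < length p"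
   and edges: "\<And>i. Suc i < length p \<Longrightarrow> i \<noteq> l \<Longrightarrow> i \<noteq> r \<Longrightarrow> F (p!i) (p!Suc i)"
   and symF: "\<And>x y. F x y \<Longrightarrow> F y x"
   and e1: "F (p!l) (p!r)" and e2: "F (p!Suc l) (p!Suc r)"
  shows "\<exists>q. ham_path F (hd p) (last p) q"
proof -
  define n where "n = length p"
  define sg where "sg i = (if l < i \<and> i \<le> r then l + r + 1 - i else i)" for i
  define q where "q = map (\<lambda>i. p ! sg i) [0..<n]"
  have sgr: "sg i < n" if "i < n" for i using that rn lr unfolding sg_def n_def by auto
  have sgsg: "sg (sg i) = i" for i unfolding sg_def by auto
  have lq: "length q = n" unfolding q_def by simp
  have qn: "q ! i = p ! sg i" if "i < n" for i unfolding q_def using that by simp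
  have dq: "distinct q"
    unfolding q_def distinct_map
  proof
    show "distinct [0..<n]" by simp
    show "inj_on (\<lambda>i. p ! sg i) (set [0..<n])"
    proof (rule inj_onI)
      fix i j assume i: "i \<in> set [0..<n]" and j: "j \<in> set [0..<n]" and e: "p ! sg i = p ! sg j"
      have "sg i = sg j" using e dp sgr i j unfolding n_def by (simp add: nth_eq_iff_index_eq)
      hence "sg (sg i) = sg (sg j)" by simp
      thus "i = j" by (simp add: sgsg)
    qed
  qed
  have sq: "set q = UNIV"
  proof -
    have "card (set q) = CARD('a)" using dq lq distinct_univ_length[OF dp sp] distinct_card n_def by metis
    thus ?thesis using card_seteq[of UNIV "set q"] by simp
  qed
  have n0: "n > 0" unfolding n_def using rn by linarith
  have pne: "p \<noteq> []" using n0 unfolding n_def by auto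
  have qne: "q \<noteq> []" using lq n0 by auto
  have hq: "hd q = hd p"
  proof -
    have "hd q = q ! 0" using qne by (simp add: hd_conv_nth)
    also have "\<dots> = p ! 0" using qn[of 0] n0 unfolding sg_def by simp
    also have "\<dots> = hd p" using pne by (simp add: hd_conv_nth)
    finally show ?thesis .
  qed
  have lastq: "last q = last p"
  proof -
    have "last q = q ! (n - 1)" using qne lq by (simp add: last_conv_nth)
    also have "\<dots> = p ! (n - 1)"
    proof -
      have "sg (n - 1) = n - 1" using rn unfolding sg_def n_def by auto
      thus ?thesis using qn[of "n-1"] n0 by simp
    qed
    also have "\<dots> = last p" using pne unfolding n_def by (simp add: last_conv_nth)
    finally show ?thesis .
  qed
  have eq: "F (q!i) (q!Suc i)" if "Suc i < length q" for i
  proof -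
    have i: "Suc i < n" using that lq by simp
    consider "i < l" | "i = l" | "l < i \<and> i < r" | "i = r" | "r < i" by linarith
    thus ?thesis
    proof cases
      case 1 thus ?thesis using edges[of i] lr i qn[of i] qn[of "Suc i"] unfolding sg_def n_def by auto
    next
      case 2 thus ?thesis using e1 i qn[of i] qn[of "Suc i"] lr unfolding sg_def n_def by auto
    next
      case 3
      have a: "sg i = l + r + 1 - i" "sg (Suc i) = l + r - i" using 3 unfolding sg_def by auto
      have "F (p ! (l + r - i)) (p ! Suc (l + r - i))"
        using 3 rn by (intro edges) (auto simp: n_def)
      moreover have "Suc (l + r - i) = l + r + 1 - i" using 3 by auto
      ultimately show ?thesis using qn[of i] qn[of "Suc i"] i a symF by auto
    next
      case 4 thus ?thesis using e2 i qn[of i] qn[of "Suc i"] lr unfolding sg_def n_def by auto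
    next
      case 5 thus ?thesis using edges[of i] lr i qn[of i] qn[of "Suc i"] unfolding sg_def n_def by auto
    qed
  qed
  have "ham_path F (hd p) (last p) q" by (rule ham_path_intro[OF dq sq qne hq lastq]) (rule eq)
  thus ?thesis by blast
qed

lemma card_idx:
  fixes p :: "'a::finite list"
  assumes dp: "distinct p" and sp: "set p = UNIV"
  shows "card {j. j < length p \<and> P (p!j)} = card {z. P z}"
proof -
  have "{z. P z} = (\<lambda>j. p!j) ` {j. j < length p \<and> P (p!j)}"
  proof
    show "{z. P z} \<subseteq> (\<lambda>j. p!j) ` {j. j < length p \<and> P (p!j)}"
    proof
      fix z assume "z \<in> {z. P z}"
      moreover obtain j where "j < length p" "p!j = z" using sp by (metis UNIV_I in_set_conv_nth)
      ultimately show "z \<in> (\<lambda>j. p!j) ` {j. j < length p \<and> P (p!j)}" by auto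
    qed
  qed auto
  moreover have "inj_on (\<lambda>j. p!j) {j. j < length p \<and> P (p!j)}"
    using dp by (auto simp: inj_on_def nth_eq_iff_index_eq)
  ultimately show ?thesis by (simp add: card_image)
qed

definition addE :: "('a \<Rightarrow> 'a \<Rightarrow> bool) \<Rightarrow> 'a \<Rightarrow> 'a \<Rightarrow> 'a \<Rightarrow> 'a \<Rightarrow> bool" where
  "addE E x y = (\<lambda>a b. E a b \<or> (a = x \<and> b = y) \<or> (a = y \<and> b = x))"

lemma closure_step:
  fixes E :: "'a::finite \<Rightarrow> 'a \<Rightarrow> bool"
  assumes sg: "simple_graph E" and xy: "x \<noteq> y" "\<not> E x y"
    and dg: "card {z. E x z} + card {z. E y z} \<ge> CARD('a) + 1"
    and hc: "hamilton_connected (addE E x y)"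
  shows "hamilton_connected E"
  unfolding hamilton_connected_def
proof (intro allI impI)
  have sym: "\<And>a b. E a b = E b a" and irr: "\<And>a. \<not> E a a"
    using sg unfolding simple_graph_def by blast+
  fix u v :: 'a assume uv: "u \<noteq> v"
  obtain p where hp: "ham_path (addE E x y) u v p" using hc uv unfolding hamilton_connected_def by blast
  have dp: "distinct p" and sp: "set p = UNIV" and pne: "p \<noteq> []" and hdp: "hd p = u" and lp: "last p = v"
    and ep: "\<And>i. Suc i < length p \<Longrightarrow> addE E x y (p!i) (p!Suc i)"
    using hp unfolding ham_path_def by auto
  define n where "n = length p"
  have nc: "n = CARD('a)" unfolding n_def using distinct_univ_length[OF dp sp] .
  show "\<exists>p. ham_path E u v p"
  proof (cases "\<forall>i. Suc i < length p \<longrightarrow> E (p!i) (p!Suc i)")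
    case True
    thus ?thesis using dp sp pne hdp lp unfolding ham_path_def by blast
  next
    case False
    then obtain k where kn: "Suc k < n" and nk: "\<not> E (p!k) (p!Suc k)" unfolding n_def by blast
    define x' where "x' = p!k"
    define y' where "y' = p!Suc k"
    have xy': "(x' = x \<and> y' = y) \<or> (x' = y \<and> y' = x)"
      using ep[of k] kn nk unfolding addE_def x'_def y'_def n_def by auto
    have nxy': "\<not> E x' y'" using nk unfolding x'_def y'_def .
    have dg': "card {z. E x' z} + card {z. E y' z} \<ge> n + 1" using xy' dg nc by auto
    have other: "E (p!i) (p!Suc i)" if "Suc i < n" "i \<noteq> k" for i
    proof (rule ccontr)
      assume ne: "\<not> E (p!i) (p!Suc i)"
      hence "(p!i = x' \<and> p!Suc i = y') \<or> (p!i = y' \<and> p!Suc i = x')"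
        using ep[of i] that xy' unfolding addE_def n_def by auto
      thus False using that kn dp unfolding x'_def y'_def n_def by (auto simp: nth_eq_iff_index_eq)
    qed
    define S where "S = {j. j < n - 1 \<and> E x' (p!j)}"
    define T where "T = {j. j < n - 1 \<and> E y' (p!Suc j)}"
    have cS: "card {z. E x' z} \<le> card S + 1"
    proof -
      have "card {z. E x' z} = card {j. j < n \<and> E x' (p!j)}"
        unfolding n_def using card_idx[OF dp sp, of "E x'"] by simp
      also have "\<dots> \<le> card (insert (n - 1) S)" by (rule card_mono) (auto simp: S_def)
      also have "\<dots> \<le> card S + 1" by (simp add: card_insert_if S_def)
      finally show ?thesis .
    qed
    have cT: "card {z. E y' z} \<le> card T + 1"
    proof -
      have "card {z. E y' z} = card {j. j < n \<and> E y' (p!j)}"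
        unfolding n_def using card_idx[OF dp sp, of "E y'"] by simp
      also have "\<dots> \<le> card (insert 0 (Suc ` T))"
      proof (rule card_mono)
        show "{j. j < n \<and> E y' (p!j)} \<subseteq> insert 0 (Suc ` T)"
        proof
          fix j assume j: "j \<in> {j. j < n \<and> E y' (p!j)}"
          show "j \<in> insert 0 (Suc ` T)"
          proof (cases j)
            case (Suc j') thus ?thesis using j unfolding T_def by auto
          qed simp
        qed
      qed (simp add: T_def)
      also have "\<dots> \<le> card (Suc ` T) + 1" by (simp add: card_insert_if T_def)
      also have "\<dots> = card T + 1" by (simp add: card_image)
      finally show ?thesis .
    qed
    have sub: "S \<union> T \<subseteq> {0..<n-1} - {k}"
      unfolding S_def T_def x'_def y'_def using irr by auto
    have "S \<inter> T \<noteq> {}"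
    proof
      assume "S \<inter> T = {}"
      hence "card S + card T = card (S \<union> T)" by (simp add: card_Un_disjoint S_def T_def)
      also have "\<dots> \<le> card ({0..<n-1} - {k})" by (rule card_mono) (use sub in auto)
      also have "\<dots> = n - 2" using kn by simp
      finally show False using cS cT dg' kn by linarith
    qed
    then obtain j where jS: "j \<in> S" and jT: "j \<in> T" by blast
    have jk: "j \<noteq> k" using jS irr unfolding S_def x'_def by auto
    have jn: "Suc j < n" using jS unfolding S_def by auto
    have Ex: "E (p!k) (p!j)" using jS unfolding S_def x'_def by auto
    have Ey: "E (p!Suc k) (p!Suc j)" using jT unfolding T_def y'_def by auto
    have symE: "\<And>a b. E a b \<Longrightarrow> E b a" using sym by blast
    have "\<exists>q. ham_path E (hd p) (last p) q"
    proof (cases "j < k")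
      case True
      show ?thesis
      proof (rule two_opt[OF dp sp True])
        show "Suc k < length p" using kn n_def by simp
        show "E (p!i) (p!Suc i)" if "Suc i < length p" "i \<noteq> j" "i \<noteq> k" for i
          using other that n_def by simp
        show "E (p!j) (p!k)" using Ex sym by simp
        show "E (p!Suc j) (p!Suc k)" using Ey sym by simp
      qed (rule symE)
    next
      case False
      hence kj: "k < j" using jk by simp
      show ?thesis
      proof (rule two_opt[OF dp sp kj])
        show "Suc j < length p" using jn n_def by simp
        show "E (p!i) (p!Suc i)" if "Suc i < length p" "i \<noteq> k" "i \<noteq> j" for i
          using other that n_def by simp
        show "E (p!k) (p!j)" using Ex .
        show "E (p!Suc k) (p!Suc j)" using Ey .
      qed (rule symE)
    qed
    thus ?thesis using hdp lp by simp
  qed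
qed



lemma complete_hc:
  fixes E :: "'a::finite \<Rightarrow> 'a \<Rightarrow> bool"
  assumes "\<And>a b. a \<noteq> b \<Longrightarrow> E a b"
  shows "hamilton_connected E"
  unfolding hamilton_connected_def
proof (intro allI impI)
  fix u v :: 'a assume uv: "u \<noteq> v"
  obtain xs where xs: "distinct xs" "set xs = UNIV - {u, v}"
    using finite_distinct_list[of "UNIV - {u,v}"] by auto
  define p where "p = u # xs @ [v]"
  have dp: "distinct p" unfolding p_def using xs uv by auto
  have "ham_path E u v p"
  proof (rule ham_path_intro)
    show "distinct p" by (rule dp)
    show "set p = UNIV" unfolding p_def using xs by auto
    show "p \<noteq> []" "hd p = u" "last p = v" unfolding p_def by auto
    fix i assume "Suc i < length p"
    hence "p ! i \<noteq> p ! Suc i" using dp by (simp add: nth_eq_iff_index_eq)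
    thus "E (p!i) (p!Suc i)" by (rule assms)
  qed
  thus "\<exists>p. ham_path E u v p" by blast
qed

definition cc :: "('a \<Rightarrow> 'a \<Rightarrow> bool) \<Rightarrow> 'a \<Rightarrow> 'a \<Rightarrow> nat" where
  "cc E z w = (if z \<noteq> w \<and> \<not> E z w then 1 else 0)"

definition ndeg :: "('a \<Rightarrow> 'a \<Rightarrow> bool) \<Rightarrow> 'a \<Rightarrow> nat" where
  "ndeg E z = card {w. w \<noteq> z \<and> \<not> E z w}"

definition NN :: "('a::finite \<Rightarrow> 'a \<Rightarrow> bool) \<Rightarrow> nat" where
  "NN E = (\<Sum>z\<in>UNIV. ndeg E z)"

lemma ndeg_sum: "ndeg E (z::'a::finite) = (\<Sum>w\<in>UNIV. cc E z w)"
  unfolding ndeg_def cc_def by (simp add: sum.If_cases conj_commute eq_commute)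

lemma deg_ndeg:
  fixes E :: "'a::finite \<Rightarrow> 'a \<Rightarrow> bool"
  assumes sg: "simple_graph E"
  shows "card {w. E z w} + ndeg E z = CARD('a) - 1"
proof -
  have irr: "\<not> E z z" using sg unfolding simple_graph_def by blast
  have "{w. E z w} \<union> {w. w \<noteq> z \<and> \<not> E z w} = UNIV - {z}" using irr by auto
  moreover have "{w. E z w} \<inter> {w. w \<noteq> z \<and> \<not> E z w} = {}" by auto
  ultimately have "card {w. E z w} + card {w. w \<noteq> z \<and> \<not> E z w} = card (UNIV - {z})"
    by (metis card_Un_disjoint finite)
  thus ?thesis unfolding ndeg_def by simp
qed

lemma simple_addE:
  assumes "simple_graph E" "x \<noteq> y"
  shows "simple_graph (addE E x y)"
  using assms unfolding simple_graph_def addE_def by blast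

lemma NN_addE:
  fixes E :: "'a::finite \<Rightarrow> 'a \<Rightarrow> bool"
  assumes sg: "simple_graph E" and xy: "x \<noteq> y" "\<not> E x y"
  shows "NN (addE E x y) + 2 = NN E"
proof -
  have sym: "\<And>a b. E a b = E b a" using sg unfolding simple_graph_def by blast
  have pw: "ndeg (addE E x y) z + ((if z = x then 1 else 0) + (if z = y then 1 else 0)) = ndeg E z" for z
  proof -
    have "ndeg E z = (\<Sum>w\<in>UNIV. cc E z w)" by (rule ndeg_sum)
    also have "\<dots> = (\<Sum>w\<in>UNIV. cc (addE E x y) z w + ((if z = x \<and> w = y then 1 else 0) + (if z = y \<and> w = x then 1 else 0)))"
      by (rule sum.cong) (use xy sym in \<open>auto simp: cc_def addE_def\<close>)
    also have "\<dots> = ndeg (addE E x y) z + ((if z = x then 1 else 0) + (if z = y then 1 else 0))"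
      by (simp add: sum.distrib ndeg_sum)
    finally show ?thesis by simp
  qed
  have "NN E = (\<Sum>z\<in>UNIV. ndeg (addE E x y) z + ((if z = x then 1 else 0) + (if z = y then 1 else 0)))"
    unfolding NN_def using pw by simp
  also have "\<dots> = NN (addE E x y) + 2" unfolding NN_def using xy by (simp add: sum.distrib)
  finally show ?thesis by simp
qed

lemma count_ineq:
  fixes E :: "'a::finite \<Rightarrow> 'a \<Rightarrow> bool"
  assumes sg: "simple_graph E" and xy: "x \<noteq> y" "\<not> E x y"
    and F: "F \<subseteq> UNIV - {x, y}"
    and Fw: "\<And>z. z \<in> F \<Longrightarrow> \<exists>w. w \<notin> {x, y} \<and> w \<noteq> z \<and> \<not> E z w"
  shows "2 * (ndeg E x + ndeg E y) + card F \<le> NN E + 2"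
proof -
  have sym: "\<And>a b. E a b = E b a" and irr: "\<And>a. \<not> E a a"
    using sg unfolding simple_graph_def by blast+
  let ?X = "{x, y}"
  have split: "(\<Sum>w\<in>UNIV. f w) = (\<Sum>w\<in>UNIV - ?X. f w) + f x + f y" for f :: "'a \<Rightarrow> nat"
    using xy by (simp add: sum.subset_diff[of ?X UNIV f])
  have cx: "(\<Sum>z\<in>UNIV - ?X. cc E z x) + 1 = ndeg E x"
  proof -
    have "ndeg E x = (\<Sum>z\<in>UNIV. cc E z x)" unfolding ndeg_sum cc_def using sym by (metis)
    thus ?thesis using split[of "\<lambda>z. cc E z x"] xy irr by (simp add: cc_def sym)
  qed
  have cy: "(\<Sum>z\<in>UNIV - ?X. cc E z y) + 1 = ndeg E y"
  proof -
    have "ndeg E y = (\<Sum>z\<in>UNIV. cc E z y)" unfolding ndeg_sum cc_def using sym by (metis)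
    thus ?thesis using split[of "\<lambda>z. cc E z y"] xy irr by (simp add: cc_def sym)
  qed
  have pz: "cc E z x + cc E z y + (if z \<in> F then 1 else 0) \<le> ndeg E z" if z: "z \<in> UNIV - ?X" for z
  proof -
    have "ndeg E z = (\<Sum>w\<in>UNIV - ?X. cc E z w) + cc E z x + cc E z y"
      using split[of "cc E z"] by (simp add: ndeg_sum)
    moreover have "(if z \<in> F then 1 else 0) \<le> (\<Sum>w\<in>UNIV - ?X. cc E z w)"
    proof (cases "z \<in> F")
      case True
      then obtain w where w: "w \<notin> ?X" "w \<noteq> z" "\<not> E z w" using Fw by blast
      have "cc E z w \<le> (\<Sum>w\<in>UNIV - ?X. cc E z w)" by (rule member_le_sum) (use w in auto)
      thus ?thesis using True w by (simp add: cc_def)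
    qed simp
    ultimately show ?thesis by simp
  qed
  have "(\<Sum>z\<in>UNIV - ?X. cc E z x + cc E z y + (if z \<in> F then 1 else 0)) \<le> (\<Sum>z\<in>UNIV - ?X. ndeg E z)"
    by (rule sum_mono) (rule pz)
  moreover have "(\<Sum>z\<in>UNIV - ?X. (if z \<in> F then 1 else 0)) = card F"
    using F by (simp add: sum.If_cases Int_absorb1)
  ultimately have "(\<Sum>z\<in>UNIV - ?X. cc E z x) + (\<Sum>z\<in>UNIV - ?X. cc E z y) + card F \<le> (\<Sum>z\<in>UNIV - ?X. ndeg E z)"
    by (simp add: sum.distrib)
  moreover have "NN E = (\<Sum>z\<in>UNIV - ?X. ndeg E z) + ndeg E x + ndeg E y"
    unfolding NN_def by (rule split)
  ultimately show ?thesis using cx cy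
  proof -
    fix A B S :: nat
    show "\<lbrakk>A + B + card F \<le> S; NN E = S + ndeg E x + ndeg E y; A + 1 = ndeg E x; B + 1 = ndeg E y\<rbrakk>
       \<Longrightarrow> 2 * (ndeg E x + ndeg E y) + card F \<le> NN E + 2" by presburger
  qed
qed



lemma hc_sparse:
  fixes E :: "'a::finite \<Rightarrow> 'a \<Rightarrow> bool"
  shows "simple_graph E \<Longrightarrow> NN E + 7 \<le> 2 * CARD('a) \<Longrightarrow> hamilton_connected E"
proof (induction "NN E" arbitrary: E rule: less_induct)
  case less
  note sg = less.prems(1)
  show ?case
  proof (cases "\<forall>a b. a \<noteq> b \<longrightarrow> E a b")
    case True thus ?thesis by (intro complete_hc) blast
  next
    case False
    then obtain x y where xy: "x \<noteq> y" "\<not> E x y" by blast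
    have ci: "2 * (ndeg E x + ndeg E y) + card ({}::'a set) \<le> NN E + 2"
      by (rule count_ineq[OF sg xy]) auto
    have dx: "card {w. E x w} + ndeg E x = CARD('a) - 1" by (rule deg_ndeg[OF sg])
    have dy: "card {w. E y w} + ndeg E y = CARD('a) - 1" by (rule deg_ndeg[OF sg])
    have n1: "CARD('a) \<ge> 1" by (simp add: Suc_leI)
    have dg: "card {z. E x z} + card {z. E y z} \<ge> CARD('a) + 1"
      using ci dx dy n1 less.prems(2) by simp
    have NA: "NN (addE E x y) + 2 = NN E" by (rule NN_addE[OF sg xy])
    have "hamilton_connected (addE E x y)"
      using less.hyps[of "addE E x y"] NA simple_addE[OF sg xy(1)] less.prems(2) by simp
    thus ?thesis by (rule closure_step[OF sg xy dg])
  qed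
qed

lemma star_case:
  fixes E :: "'a::finite \<Rightarrow> 'a \<Rightarrow> bool"
  assumes sg: "simple_graph E" and NN: "NN E + 5 \<le> 2 * CARD('a)"
    and ab: "a \<noteq> b" "\<not> E a b"
    and star: "\<And>z t. z \<noteq> t \<Longrightarrow> \<not> E z t \<Longrightarrow> a = z \<or> a = t"
    and big: "\<And>x y. x \<noteq> y \<Longrightarrow> \<not> E x y \<Longrightarrow> ndeg E x + ndeg E y + 3 > CARD('a)"
  shows "is_K_minus_plus_two E"
proof -
  have sym: "\<And>u w. E u w = E w u" and irr: "\<And>u. \<not> E u u"
    using sg unfolding simple_graph_def by blast+
  have "{w. w \<noteq> b \<and> \<not> E b w} = {a}" using star ab sym by fastforce
  hence ndb: "ndeg E b = 1" unfolding ndeg_def by simp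
  have ci: "2 * (ndeg E a + ndeg E b) + card ({}::'a set) \<le> NN E + 2"
    by (rule count_ineq[OF sg ab]) auto
  have bg: "ndeg E a + ndeg E b + 3 > CARD('a)" using big ab by blast
  have da: "card {w. E a w} + ndeg E a = CARD('a) - 1" by (rule deg_ndeg[OF sg])
  have "card {w. E a w} = 2" using ci bg da ndb NN by simp
  then obtain p q where pq: "p \<noteq> q" "{w. E a w} = {p, q}" by (auto simp: card_2_iff)
  have Eap: "E a p" "E a q" using pq by blast+
  have pa: "p \<noteq> a" "q \<noteq> a" using Eap irr by auto
  have EaI: "E a w \<longleftrightarrow> w = p \<or> w = q" for w using pq by blast
  show ?thesis unfolding is_K_minus_plus_two_def
  proof (intro exI conjI allI)
    show "p \<noteq> q" "p \<noteq> a" "q \<noteq> a" using pq pa by auto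
    fix x y
    show "E x y \<longleftrightarrow> (x \<noteq> y \<and> x \<noteq> a \<and> y \<noteq> a) \<or> {x, y} = {a, p} \<or> {x, y} = {a, q}"
    proof (cases "x = a")
      case True thus ?thesis using EaI[of y] pa by (auto simp: doubleton_eq_iff)
    next
      case xa: False
      show ?thesis
      proof (cases "y = a")
        case True thus ?thesis using EaI[of x] pa xa sym[of x y] by (auto simp: doubleton_eq_iff)
      next
        case ya: False
        have "E x y \<longleftrightarrow> x \<noteq> y" using star[of x y] irr xa ya by auto
        thus ?thesis using xa ya by (auto simp: doubleton_eq_iff)
      qed
    qed
  qed
qed

lemma triangle_spec:
  fixes E :: "'a::finite \<Rightarrow> 'a \<Rightarrow> bool"
  assumes card6: "CARD('a) = 6" and T3: "card T = 3"
    and Edef: "\<And>z w. E z w \<longleftrightarrow> z \<noteq> w \<and> \<not> (z \<in> T \<and> w \<in> T)"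
    and v0: "v \<noteq> 0" and ev: "adj_matrix E *v v = l *\<^sub>R v"
  shows "l^2 - 2 * l - 9 = 0 \<or> l = 0 \<or> l = -1"
proof (rule ccontr)
  assume H: "\<not> (l^2 - 2 * l - 9 = 0 \<or> l = 0 \<or> l = -1)"
  define R where "R = UNIV - T"
  have R3: "card R = 3" unfolding R_def using card6 T3 by (simp add: card_Diff_subset)
  define ST where "ST = (\<Sum>j\<in>T. v$j)"
  define SR where "SR = (\<Sum>j\<in>R. v$j)"
  have S: "(\<Sum>j\<in>UNIV. v$j) = ST + SR"
    unfolding ST_def SR_def R_def by (simp add: sum.subset_diff[of T UNIV])
  have row: "l * v$i = (\<Sum>j\<in>UNIV. if E i j then v$j else 0)" for i
    using mv_adj[of E v i] ev by simp
  have rowT: "l * v$i = SR" if "i \<in> T" for i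
  proof -
    have "l * v$i = (\<Sum>j\<in>UNIV. if j \<in> R then v$j else 0)"
      unfolding row by (rule sum.cong) (use that in \<open>auto simp: Edef R_def\<close>)
    also have "\<dots> = SR" unfolding SR_def by (simp add: sum.If_cases)
    finally show ?thesis .
  qed
  have rowR: "l * v$i = ST + SR - v$i" if "i \<in> R" for i
  proof -
    have "l * v$i = (\<Sum>j\<in>UNIV. if j \<noteq> i then v$j else 0)"
      unfolding row by (rule sum.cong) (use that in \<open>auto simp: Edef R_def\<close>)
    also have "\<dots> = (\<Sum>j\<in>UNIV. v$j) - v$i"
    proof -
      have "{j. j \<noteq> i} = UNIV - {i}" by auto
      thus ?thesis by (simp add: sum.If_cases sum_diff1)
    qed
    finally show ?thesis using S by simp
  qed
  have fT: "finite T" "finite R" by auto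
  have eqT: "l * ST = 3 * SR"
  proof -
    have "l * ST = (\<Sum>i\<in>T. l * v$i)" unfolding ST_def by (simp add: sum_distrib_left)
    also have "\<dots> = (\<Sum>i\<in>T. SR)" by (rule sum.cong) (auto simp: rowT)
    finally show ?thesis using T3 by simp
  qed
  have eqR: "l * SR = 3 * ST + 2 * SR"
  proof -
    have "l * SR = (\<Sum>i\<in>R. l * v$i)" unfolding SR_def by (simp add: sum_distrib_left)
    also have "\<dots> = (\<Sum>i\<in>R. ST + SR - v$i)" by (rule sum.cong) (auto simp: rowR)
    also have "\<dots> = 3 * (ST + SR) - SR" using R3 by (simp add: sum_subtractf SR_def)
    finally show ?thesis by simp
  qed
  have "SR * (l^2 - 2 * l - 9) = 0"
  proof -
    have "l * (l * SR) = 3 * (l * ST) + 2 * (l * SR)" using eqR by (simp add: algebra_simps)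
    hence "l * (l * SR) = 9 * SR + 2 * (l * SR)" using eqT by simp
    thus ?thesis by (simp add: algebra_simps power2_eq_square)
  qed
  hence SR0: "SR = 0" using H by simp
  hence "l * ST = 0" using eqT by simp
  hence ST0: "ST = 0" using H by simp
  have "v$i = 0" for i
  proof (cases "i \<in> T")
    case True thus ?thesis using rowT[OF True] SR0 H by simp
  next
    case False
    hence "i \<in> R" unfolding R_def by simp
    hence "(l + 1) * v$i = 0" using rowR SR0 ST0 by (simp add: algebra_simps)
    moreover have "l + 1 \<noteq> 0" using H by auto
    ultimately show ?thesis by simp
  qed
  hence "v = 0" by (simp add: vec_eq_iff)
  thus False using v0 by simp
qed



theorem theorem3p1:
  fixes E :: "'a::finite \<Rightarrow> 'a \<Rightarrow> bool" and n :: nat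
  assumes "simple_graph E"
    and "n = CARD('a)"
    and "spectral_radius_graph E > - 1/2 + sqrt ((real n - 3/2)^2 + 2)"
  shows "hamilton_connected E \<or> is_K_minus_plus_two E"
proof -
  note sg = assms(1)
  have sym: "\<And>u w. E u w = E w u" and irr: "\<And>u. \<not> E u u"
    using sg unfolding simple_graph_def by blast+
  define mu where "mu = spectral_radius_graph E"
  obtain v where v0: "v \<noteq> 0" and ev: "adj_matrix E *v v = mu *\<^sub>R v"
    using spectral_radius_eig[OF sg] unfolding mu_def by blast
  have st: "mu^2 + mu \<le> real (\<Sum>i\<in>UNIV. card {j. E i j})" by (rule stanley[OF sg v0 ev])
  have big: "mu^2 + mu > real n ^ 2 - 3 * real n + 4"
  proof -
    have "mu + 1/2 > sqrt ((real n - 3/2)^2 + 2)" using assms(3) unfolding mu_def by simp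
    moreover have "sqrt ((real n - 3/2)^2 + 2) \<ge> 0" by simp
    ultimately have "(mu + 1/2)^2 > (sqrt ((real n - 3/2)^2 + 2))^2"
      by (intro power_strict_mono) auto
    hence "(mu + 1/2)^2 > (real n - 3/2)^2 + 2" by simp
    thus ?thesis by (simp add: power2_eq_square algebra_simps)
  qed
  have sumdeg: "(\<Sum>i\<in>UNIV. card {j. E i j}) + NN E = n * (n - 1)"
  proof -
    have "(\<Sum>i\<in>UNIV. card {j. E i j}) + NN E = (\<Sum>i\<in>UNIV. card {j. E i j} + ndeg E i)"
      unfolding NN_def by (simp add: sum.distrib)
    also have "\<dots> = (\<Sum>i\<in>(UNIV::'a set). CARD('a) - 1)" using deg_ndeg[OF sg] by simp
    finally show ?thesis using assms(2) by simp
  qed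
  have n1: "n \<ge> 1" using assms(2) by (simp add: Suc_leI)
  have NNb: "NN E + 5 \<le> 2 * n"
  proof -
    have "real (\<Sum>i\<in>UNIV. card {j. E i j}) + real (NN E) = real n * (real n - 1)"
      using sumdeg n1 by (metis of_nat_1 of_nat_add of_nat_diff of_nat_mult)
    hence "real (NN E) < 2 * real n - 4" using st big by (simp add: algebra_simps power2_eq_square)
    thus ?thesis by linarith
  qed
  let ?Q = "\<lambda>x y. x \<noteq> y \<and> \<not> E x y"
  show ?thesis
  proof (cases "NN E + 7 \<le> 2 * n")
    case True thus ?thesis using hc_sparse[OF sg] assms(2) by simp
  next
    case N7: False
    show ?thesis
    proof (cases "\<forall>a b. a \<noteq> b \<longrightarrow> E a b")
      case True thus ?thesis using complete_hc by blast
    next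
      case False
      then obtain a b where ab: "a \<noteq> b" "\<not> E a b" by blast
      show ?thesis
      proof (cases "\<exists>x y. ?Q x y \<and> ndeg E x + ndeg E y + 3 \<le> n")
        case True
        then obtain x y where xy: "x \<noteq> y" "\<not> E x y" and s: "ndeg E x + ndeg E y + 3 \<le> n" by blast
        have dx: "card {w. E x w} + ndeg E x = n - 1" using deg_ndeg[OF sg] assms(2) by simp
        have dy: "card {w. E y w} + ndeg E y = n - 1" using deg_ndeg[OF sg] assms(2) by simp
        have dg: "card {z. E x z} + card {z. E y z} \<ge> CARD('a) + 1"
          using dx dy s assms(2) by simp
        have NA: "NN (addE E x y) + 2 = NN E" by (rule NN_addE[OF sg xy])
        have "hamilton_connected (addE E x y)"
          using hc_sparse[OF simple_addE[OF sg xy(1)]] NA NNb assms(2) by simp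
        thus ?thesis using closure_step[OF sg xy dg] by simp
      next
        case False
        hence bigd: "\<And>x y. x \<noteq> y \<Longrightarrow> \<not> E x y \<Longrightarrow> ndeg E x + ndeg E y + 3 > CARD('a)"
        proof -
          fix x y assume "x \<noteq> y" "\<not> E x y"
          hence "\<not> ndeg E x + ndeg E y + 3 \<le> n" using False by blast
          thus "ndeg E x + ndeg E y + 3 > CARD('a)" using assms(2) by simp
        qed
        have meet: "z = x \<or> z = y \<or> t = x \<or> t = y"
          if Qxy: "x \<noteq> y" "\<not> E x y" and Qzt: "z \<noteq> t" "\<not> E z t" for x y z t
        proof (rule ccontr)
          assume nm: "\<not> (z = x \<or> z = y \<or> t = x \<or> t = y)"
          have "2 * (ndeg E x + ndeg E y) + card {z, t} \<le> NN E + 2"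
          proof (rule count_ineq[OF sg Qxy])
            show "{z, t} \<subseteq> UNIV - {x, y}" using nm by auto
            fix u assume "u \<in> {z, t}"
            thus "\<exists>w. w \<notin> {x, y} \<and> w \<noteq> u \<and> \<not> E u w" using nm Qzt sym by auto
          qed
          moreover have "card {z, t} = 2" using Qzt by simp
          moreover have "ndeg E x + ndeg E y + 3 > CARD('a)" using bigd Qxy by blast
          ultimately show False using NNb assms(2) by simp
        qed
        show ?thesis
        proof (cases "\<forall>z t. ?Q z t \<longrightarrow> a = z \<or> a = t")
          case True
          thus ?thesis using star_case[OF sg _ ab _ bigd] NNb assms(2) by auto
        next
          case nA: False
          show ?thesis
          proof (cases "\<forall>z t. ?Q z t \<longrightarrow> b = z \<or> b = t")
            case True
            have ba: "b \<noteq> a" "\<not> E b a" using ab sym by auto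
            thus ?thesis using star_case[OF sg _ ba _ bigd] True NNb assms(2) by auto
          next
            case nB: False
            obtain z1 t1 where q1: "z1 \<noteq> t1" "\<not> E z1 t1" "a \<noteq> z1" "a \<noteq> t1" using nA by blast
            obtain z2 t2 where q2: "z2 \<noteq> t2" "\<not> E z2 t2" "b \<noteq> z2" "b \<noteq> t2" using nB by blast
            obtain c where c: "c \<noteq> a" "c \<noteq> b" "\<not> E b c"
              using meet[OF ab q1(1,2)] q1 sym by metis
            obtain d where d: "d \<noteq> a" "d \<noteq> b" "\<not> E a d"
              using meet[OF ab q2(1,2)] q2 sym by metis
            have "d = c" using meet[of b c a d] c d ab by auto
            hence ac: "\<not> E a c" using d by simp
            have tri: "E z w \<longleftrightarrow> z \<noteq> w \<and> \<not> (z \<in> {a,b,c} \<and> w \<in> {a,b,c})" for z w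
            proof
              assume "E z w" thus "z \<noteq> w \<and> \<not> (z \<in> {a,b,c} \<and> w \<in> {a,b,c})"
                using irr sym ab ac c by auto
            next
              assume h: "z \<noteq> w \<and> \<not> (z \<in> {a,b,c} \<and> w \<in> {a,b,c})"
              show "E z w"
              proof (rule ccontr)
                assume "\<not> E z w"
                hence "\<not> E w z" using sym by simp
                thus False using h \<open>\<not> E z w\<close> meet[of a b z w] meet[of b c z w] meet[of a c z w]
                  meet[of a b w z] meet[of b c w z] meet[of a c w z] ab ac c by auto
              qed
            qed
            have T3: "card {a,b,c} = 3" using ab c by simp
            have nda: "ndeg E a = 2"
            proof -
              have "{w. w \<noteq> a \<and> \<not> E a w} = {b, c}" using tri ab c by auto
              thus ?thesis unfolding ndeg_def using c by simp
            qed
            have ndb: "ndeg E b = 2"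
            proof -
              have "{w. w \<noteq> b \<and> \<not> E b w} = {a, c}" using tri ab c by auto
              thus ?thesis unfolding ndeg_def using c ab by auto
            qed
            have ndc: "ndeg E c = 2"
            proof -
              have "{w. w \<noteq> c \<and> \<not> E c w} = {a, b}" using tri ab c by auto
              thus ?thesis unfolding ndeg_def using c ab by auto
            qed
            have "NN E \<ge> 6"
            proof -
              have "(\<Sum>z\<in>{a,b,c}. ndeg E z) \<le> NN E" unfolding NN_def by (rule sum_mono2) auto
              moreover have "(\<Sum>z\<in>{a,b,c}. ndeg E z) = 6" using nda ndb ndc ab c by simp
              ultimately show ?thesis by simp
            qed
            moreover have "n < 7" using bigd[OF ab] nda ndb assms(2) by simp
            ultimately have n6: "n = 6" using NNb by simp
            have "mu^2 - 2 * mu - 9 = 0 \<or> mu = 0 \<or> mu = -1"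
              by (rule triangle_spec[OF _ T3 tri v0 ev]) (use n6 assms(2) in simp)
            moreover have "mu^2 + mu > 22" using big n6 by simp
            ultimately have e: "mu^2 = 2 * mu + 9" by auto
            hence "3 * mu > 13" using \<open>mu^2 + mu > 22\<close> by simp
            hence "mu^2 > 13 / 3 * mu" by (simp add: power2_eq_square)
            thus ?thesis using e \<open>3 * mu > 13\<close> by simp
          qed
        qed
      qed
    qed
  qed
qed

end
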